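(* Let $n\ge1$, $k\ge1$ and take weights $a_j=1/j$. Then \[ \mathbb E(S_{n,k})=\frac{1}{\zeta^\star_n(\{1\}_k)}\sum_{\ell=0}^{k-2}H_n^{(\ell+2)}\,\zeta^\star_n(\{1\}_{k-\ell-2}) \] (the sum being empty, hence $0$, for $k=1$).
   Context: For $\vec\ell=(\ell_1,\dots,\ell_k)$ with $n\ge\ell_1\ge\cdots\ge\ell_k\ge1$ let $\sigma(\vec\ell)=|\{1\le j\le k-1:\ell_j=\ell_{j+1}\}|$. With $a_j=1/j$, $\theta_{n;k}(t)=\zeta^t_n(\{1\}_k)=\sum_{n\ge\ell_1\ge\cdots\ge\ell_k\ge1}t^{\sigma(\vec\ell)}\prod_i\ell_i^{-1}$, and $S_{n,k}$ is the random variable with $\mathbb P\{S_{n,k}=j\}=[t^j]\theta_{n;k}(t)/\theta_{n;k}(1)$. $\zeta^\star_n(\{1\}_k)=\theta_{n;k}(1)$, with $\zeta^\star_n(\{1\}_0)=1$; $H_n^{(i)}=\sum_{m=1}^nm^{-i}$. *)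

theory Defs
  imports Complex_Main "HOL-Computational_Algebra.Polynomial"
begin

definition tuples :: "nat \<Rightarrow> nat \<Rightarrow> nat list set" where
  "tuples n k = {l. length l = k \<and> set l \<subseteq> {1..n} \<and> sorted_wrt (\<ge>) l}"

text \<open>sigma(l) = number of 1 \<le> j \<le> k-1 with l_j = l_(j+1) (0-based indices here).\<close>
definition sigma :: "nat list \<Rightarrow> nat" where
  "sigma l = card {j. Suc j < length l \<and> l ! j = l ! Suc j}"

definition weight :: "nat list \<Rightarrow> real" where
  "weight l = (\<Prod>i<length l. 1 / real (l ! i))"

definition theta :: "nat \<Rightarrow> nat \<Rightarrow> real poly" where
  "theta n k = (\<Sum>l\<in>tuples n k. monom (weight l) (sigma l))"

definition zeta_star :: "nat \<Rightarrow> nat \<Rightarrow> real" where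
  "zeta_star n k = poly (theta n k) 1"

definition prob_S :: "nat \<Rightarrow> nat \<Rightarrow> nat \<Rightarrow> real" where
  "prob_S n k j = coeff (theta n k) j / poly (theta n k) 1"

text \<open>E(S_{n,k}); S_{n,k} takes values in {0..k-1} \<subseteq> {0..degree}, so summing over
  j \<le> degree(theta) covers the full support.\<close>
definition expect_S :: "nat \<Rightarrow> nat \<Rightarrow> real" where
  "expect_S n k = (\<Sum>j\<le>degree (theta n k). real j * prob_S n k j)"

definition harm :: "nat \<Rightarrow> nat \<Rightarrow> real" where
  "harm i n = (\<Sum>m=1..n. 1 / real m ^ i)"

end

theory Submission imports Defs begin

lemma fin_tuples: "finite (tuples n k)"
  unfolding tuples_def
  by (rule finite_subset[OF _ finite_lists_length_eq[OF finite_atLeastAtMost[of 1 n], of k]]) auto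

lemma tuples_0: "tuples n 0 = {[]}"
  unfolding tuples_def by auto

lemma tuples_0_Suc: "tuples 0 (Suc k) = {}"
  unfolding tuples_def by (auto simp: length_Suc_conv)

lemma tuples_Suc: "tuples (Suc m) (Suc k) = Cons (Suc m) ` tuples (Suc m) k \<union> tuples m (Suc k)"
proof (rule set_eqI)
  fix l
  show "l \<in> tuples (Suc m) (Suc k) \<longleftrightarrow> l \<in> Cons (Suc m) ` tuples (Suc m) k \<union> tuples m (Suc k)"
  proof
    assume "l \<in> tuples (Suc m) (Suc k)"
    then obtain a l' where l: "l = a # l'" "length l' = k" "a \<in> {1..Suc m}" "set l' \<subseteq> {1..Suc m}"
      "\<forall>x\<in>set l'. x \<le> a" "sorted_wrt (\<ge>) l'"
      unfolding tuples_def by (auto simp: length_Suc_conv)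
    show "l \<in> Cons (Suc m) ` tuples (Suc m) k \<union> tuples m (Suc k)"
    proof (cases "a = Suc m")
      case True thus ?thesis using l unfolding tuples_def by auto
    next
      case False
      hence "a \<le> m" using l by auto
      hence "set l' \<subseteq> {1..m}" using l by force
      thus ?thesis using l \<open>a \<le> m\<close> unfolding tuples_def by auto
    qed
  next
    assume "l \<in> Cons (Suc m) ` tuples (Suc m) k \<union> tuples m (Suc k)"
    thus "l \<in> tuples (Suc m) (Suc k)" unfolding tuples_def by (auto; force)
  qed
qed

lemma tuples_disj: "Cons (Suc m) ` tuples (Suc m) k \<inter> tuples m (Suc k) = {}"
  unfolding tuples_def by auto

lemma sigma_Cons: "sigma (a # l) = sigma l + (if l \<noteq> [] \<and> hd l = a then 1 else 0)"
proof -
  have "{j. Suc j < length (a#l) \<and> (a#l) ! j = (a#l) ! Suc j} =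
        (if l \<noteq> [] \<and> hd l = a then {0} else {}) \<union> Suc ` {j. Suc j < length l \<and> l ! j = l ! Suc j}"
    apply (rule set_eqI) apply (case_tac x) by (auto simp: hd_conv_nth)
  moreover have "finite {j. Suc j < length l \<and> l ! j = l ! Suc j}"
    by (rule finite_subset[of _ "{..<length l}"]) auto
  ultimately show ?thesis unfolding sigma_def
    by (auto simp: card_image)
qed

lemma weight_Cons: "weight (a # l) = weight l / real a"
  unfolding weight_def length_Cons prod.lessThan_Suc_shift by simp

lemma sigma_le: "sigma l \<le> length l"
proof -
  have "{j. Suc j < length l \<and> l ! j = l ! Suc j} \<subseteq> {..<length l}" by auto
  from card_mono[OF _ this] show ?thesis unfolding sigma_def by auto
qed


definition Z :: "nat \<Rightarrow> nat \<Rightarrow> real" where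
  "Z n k = (\<Sum>l\<in>tuples n k. weight l)"
definition D :: "nat \<Rightarrow> nat \<Rightarrow> real" where
  "D n k = (\<Sum>l\<in>tuples n k. real (sigma l) * weight l)"
definition R :: "nat \<Rightarrow> nat \<Rightarrow> real" where
  "R n k = (\<Sum>i<k-1. harm (i+2) n * Z n (k - i - 2))"

lemma Z_0 [simp]: "Z n 0 = 1"
  by (simp add: Z_def tuples_0 weight_def)

lemma D_0: "D n 0 = 0"
  by (simp add: D_def tuples_0 sigma_def)

lemma D_1: "D n 1 = 0"
proof -
  have "\<forall>l\<in>tuples n 1. sigma l = 0"
    by (auto simp: tuples_def sigma_def length_Suc_conv)
  thus ?thesis by (simp add: D_def)
qed

lemma sum_split_Suc:
  fixes f :: "nat list \<Rightarrow> real"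
  shows "(\<Sum>l\<in>tuples (Suc m) (Suc k). f l) = (\<Sum>l\<in>tuples (Suc m) k. f (Suc m # l)) + (\<Sum>l\<in>tuples m (Suc k). f l)"
  unfolding tuples_Suc
  by (subst sum.union_disjoint) (auto simp: fin_tuples tuples_disj sum.reindex)

lemma Z_rec: "Z (Suc m) (Suc k) = Z (Suc m) k / real (Suc m) + Z m (Suc k)"
  unfolding Z_def sum_split_Suc weight_Cons by (simp add: sum_divide_distrib)

lemma hd_sum: "(\<Sum>l\<in>tuples (Suc m) (Suc k). if l \<noteq> [] \<and> hd l = Suc m then weight l else 0) = Z (Suc m) k / real (Suc m)"
proof -
  have "(\<Sum>l\<in>tuples m (Suc k). if l \<noteq> [] \<and> hd l = Suc m then weight l else 0) = 0"
    by (rule sum.neutral) (auto simp: tuples_def neq_Nil_conv)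
  thus ?thesis unfolding sum_split_Suc Z_def by (simp add: weight_Cons sum_divide_distrib)
qed

lemma D_rec: "D (Suc m) (Suc (Suc k)) = D (Suc m) (Suc k) / real (Suc m) + Z (Suc m) k / real (Suc m)^2 + D m (Suc (Suc k))"
proof -
  have "D (Suc m) (Suc (Suc k)) = (\<Sum>l\<in>tuples (Suc m) (Suc k). (real (sigma l) * weight l + (if l \<noteq> [] \<and> hd l = Suc m then weight l else 0)) / real (Suc m)) + D m (Suc (Suc k))"
    unfolding D_def sum_split_Suc[of _ m "Suc k"] sigma_Cons weight_Cons
    by (intro arg_cong2[where f="(+)"] sum.cong) (auto simp: field_simps)
  also have "\<dots> = D (Suc m) (Suc k) / real (Suc m) + Z (Suc m) k / real (Suc m)^2 + D m (Suc (Suc k))"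
    unfolding add_divide_distrib sum.distrib sum_divide_distrib[symmetric] hd_sum by (simp add: D_def power2_eq_square)
  finally show ?thesis .
qed

lemma harm_Suc: "harm i (Suc m) = harm i m + 1 / real (Suc m) ^ i"
  unfolding harm_def by simp

lemma harm_0: "harm i 0 = 0"
  unfolding harm_def by simp

lemma Z_conv: "Z (Suc m) j = (\<Sum>i\<le>j. Z m (j - i) / real (Suc m) ^ i)"
proof (induction j)
  case 0 thus ?case by simp
next
  case (Suc j)
  have "(\<Sum>i\<le>Suc j. Z m (Suc j - i) / real (Suc m) ^ i) = Z m (Suc j) + (\<Sum>i\<le>j. Z m (Suc j - Suc i) / real (Suc m) ^ Suc i)"
    by (subst sum.atMost_Suc_shift) simp
  also have "\<dots> = Z m (Suc j) + Z (Suc m) j / real (Suc m)"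
    unfolding Suc.IH sum_divide_distrib by (simp add: field_simps)
  finally show ?case using Z_rec by simp
qed

lemma R_rec: "R (Suc m) (Suc (Suc k)) = R (Suc m) (Suc k) / real (Suc m) + Z (Suc m) k / real (Suc m)^2 + R m (Suc (Suc k))"
proof -
  let ?h = "\<lambda>i. harm (i+2) (Suc m)"
  have Zs: "Z (Suc m) (k - i) = (if i < k then Z (Suc m) (k - i - 1) / real (Suc m) else 0) + Z m (k - i)" if "i \<le> k" for i
  proof (cases "i < k")
    case True
    hence "k - i = Suc (k - i - 1)" by simp
    thus ?thesis using True Z_rec by (metis diff_Suc_1)
  next
    case False thus ?thesis using that by simp
  qed
  have "R (Suc m) (Suc (Suc k)) = (\<Sum>i<Suc k. ?h i * Z (Suc m) (k - i))" unfolding R_def by simp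
  also have "\<dots> = (\<Sum>i<Suc k. ?h i * (if i < k then Z (Suc m) (k - i - 1) / real (Suc m) else 0)) + (\<Sum>i<Suc k. ?h i * Z m (k - i))"
    unfolding sum.distrib[symmetric] by (intro sum.cong refl) (simp add: Zs distrib_left)
  also have "(\<Sum>i<Suc k. ?h i * (if i < k then Z (Suc m) (k - i - 1) / real (Suc m) else 0)) = R (Suc m) (Suc k) / real (Suc m)"
    unfolding R_def sum_divide_distrib by (simp add: Suc_diff_Suc)
  also have "(\<Sum>i<Suc k. ?h i * Z m (k - i)) = R m (Suc (Suc k)) + (\<Sum>i<Suc k. Z m (k - i) / real (Suc m) ^ (i+2))"
    unfolding R_def harm_Suc by (simp add: sum.distrib distrib_right)
  also have "(\<Sum>i<Suc k. Z m (k - i) / real (Suc m) ^ (i+2)) = Z (Suc m) k / real (Suc m)^2"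
    unfolding Z_conv sum_divide_distrib lessThan_Suc_atMost by (intro sum.cong refl) (simp add: power_add power2_eq_square)
  finally show ?thesis by simp
qed

lemma D_eq_R: "D n k = R n k"
proof (induction n arbitrary: k)
  case 0
  show ?case
  proof (cases k)
    case 0 thus ?thesis by (simp add: D_0 R_def)
  next
    case (Suc k') thus ?thesis by (simp add: D_def R_def tuples_0_Suc harm_0)
  qed
next
  case (Suc m)
  show ?case
  proof (induction k rule: nat_less_induct)
    case (1 k)
    show ?case
    proof (cases k)
      case 0 thus ?thesis by (simp add: D_0 R_def)
    next
      case (Suc k1)
      show ?thesis
      proof (cases k1)
        case 0 thus ?thesis using Suc by (simp add: D_1[simplified] R_def)
      next
        case (Suc k2)
        thus ?thesis using \<open>k = Suc k1\<close> 1 Suc.IH by (simp add: D_rec R_rec)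
      qed
    qed
  qed
qed

lemma zeta_Z: "zeta_star n k = Z n k"
  unfolding zeta_star_def theta_def poly_sum poly_monom Z_def by simp

lemma deriv_sum: "(\<Sum>j\<le>degree (theta n k). real j * coeff (theta n k) j) = D n k"
proof -
  define N where "N = max (degree (theta n k)) k"
  have "(\<Sum>j\<le>degree (theta n k). real j * coeff (theta n k) j) = (\<Sum>j\<le>N. real j * coeff (theta n k) j)"
    by (rule sum.mono_neutral_left) (auto simp: N_def coeff_eq_0)
  also have "\<dots> = (\<Sum>j\<le>N. \<Sum>l\<in>tuples n k. (if sigma l = j then real j * weight l else 0))"
    unfolding theta_def coeff_sum sum_distrib_left by (intro sum.cong refl) auto
  also have "\<dots> = (\<Sum>l\<in>tuples n k. \<Sum>j\<le>N. (if sigma l = j then real j * weight l else 0))"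
    by (rule sum.swap)
  also have "\<dots> = D n k"
    unfolding D_def
  proof (intro sum.cong refl)
    fix l assume "l \<in> tuples n k"
    hence "sigma l \<le> N" using sigma_le[of l] by (auto simp: tuples_def N_def)
    thus "(\<Sum>j\<le>N. (if sigma l = j then real j * weight l else 0)) = real (sigma l) * weight l"
      by (simp add: sum.delta)
  qed
  finally show ?thesis .
qed

theorem mainTheorem13:
  fixes n k :: nat
  assumes "n \<ge> 1" and "k \<ge> 1"
  shows "expect_S n k =
    (1 / zeta_star n k) * (\<Sum>l=0..<k-1. harm (l+2) n * zeta_star n (k - l - 2))"
proof -
  have "expect_S n k = (\<Sum>j\<le>degree (theta n k). real j * coeff (theta n k) j) / Z n k"
    unfolding expect_S_def prob_S_def sum_divide_distrib
    by (simp add: zeta_star_def[symmetric] zeta_Z)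
  also have "\<dots> = R n k / Z n k" by (simp add: deriv_sum D_eq_R)
  finally show ?thesis by (simp add: R_def zeta_Z atLeast0LessThan)
qed

end
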